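(* Let $M=M(S^2;\frac{q_1}{p_1},\frac{q_2}{p_2},\frac{q_3}{p_3})$ with $e(M)\neq0$, and let $\rho:\pi_1(M)\to\mathrm{SL}_2(\mathbb{C})$ be a diagonal representation with $\rho(h)=\pm I$. Then $H^1(M,\mathrm{Ad}\,\rho)=0$ if $\rho$ is not exceptional, and $\dim H^1(M,\mathrm{Ad}\,\rho)=2$ if $\rho$ is exceptional.
   Context: $M(S^2;\frac{q_1}{p_1},\frac{q_2}{p_2},\frac{q_3}{p_3})$ ($(p_i,q_i)$ coprime, $p_i\ge1$) is the closed Seifert manifold obtained from $S_{0,3}\times S^1$ by gluing solid tori whose meridians are $p_ic_i+q_ih_i$; $e(M)=\sum_iq_i/p_i$; $\pi_1(M)=\langle c_1,c_2,c_3,h\mid [c_i,h]=1=c_i^{p_i}h^{q_i},\ c_1c_2c_3=1\rangle$. A representation $\rho$ is exceptional if $\rho(h)=\pm I$ and $\rho(c_i)\neq\pm I$ for $i=1,2,3$. $\mathrm{Ad}\,\rho$ is the conjugation action on $\mathfrak{sl}_2(\mathbb{C})$ and $H^1(M,\mathrm{Ad}\,\rho)=Z^1/B^1$, where $Z^1$ is the space of maps $\varepsilon:\pi_1(M)\to\mathfrak{sl}_2(\mathbb{C})$ with $\varepsilon(xy)=\varepsilon(x)+\mathrm{Ad}\,\rho(x)\varepsilon(y)$ and $B^1=\{x\mapsto A-\mathrm{Ad}\,\rho(x)A : A\in\mathfrak{sl}_2(\mathbb{C})\}$. *)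

theory Defs
  imports "HOL-Analysis.Analysis"
begin

type_synonym cmat = "complex^2^2"

text \<open>Generators of pi_1(M) for M = M(S^2; q1/p1, q2/p2, q3/p3).\<close>
datatype gen = C1 | C2 | C3 | H

fun cg :: "nat \<Rightarrow> gen" where
  "cg (Suc 0) = C1" | "cg (Suc (Suc 0)) = C2" | "cg _ = C3"

text \<open>Words in the free group: a letter (g, True) is g, (g, False) is g^-1.\<close>
type_synonym word = "(gen \<times> bool) list"

definition pw :: "gen \<Rightarrow> int \<Rightarrow> word" where
  "pw g k = (if 0 \<le> k then replicate (nat k) (g, True) else replicate (nat (- k)) (g, False))"

definition relators :: "(nat \<Rightarrow> int) \<Rightarrow> (nat \<Rightarrow> int) \<Rightarrow> word set" where
  "relators p q =
     {[(cg i, True), (H, True), (cg i, False), (H, False)] | i. i \<in> {1,2,3}}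
   \<union> {pw (cg i) (p i) @ pw H (q i) | i. i \<in> {1,2,3}}
   \<union> {[(C1, True), (C2, True), (C3, True)]}"

text \<open>Equality in pi_1(M) = free group / normal closure of the relators.\<close>
inductive pi1_eq :: "(nat \<Rightarrow> int) \<Rightarrow> (nat \<Rightarrow> int) \<Rightarrow> word \<Rightarrow> word \<Rightarrow> bool"
  for p q where
  refl: "pi1_eq p q w w"
| sym: "pi1_eq p q u v \<Longrightarrow> pi1_eq p q v u"
| trans: "pi1_eq p q u v \<Longrightarrow> pi1_eq p q v w \<Longrightarrow> pi1_eq p q u w"
| cancel: "pi1_eq p q (u @ [(g, b), (g, \<not> b)] @ v) (u @ v)"
| rel: "r \<in> relators p q \<Longrightarrow> pi1_eq p q (u @ r @ v) (u @ v)"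

text \<open>A representation pi_1(M) -> SL_2(C), given by images of the generators.\<close>
definition letter_mat :: "(gen \<Rightarrow> cmat) \<Rightarrow> gen \<times> bool \<Rightarrow> cmat" where
  "letter_mat \<rho> x = (if snd x then \<rho> (fst x) else matrix_inv (\<rho> (fst x)))"

definition rho_word :: "(gen \<Rightarrow> cmat) \<Rightarrow> word \<Rightarrow> cmat" where
  "rho_word \<rho> w = foldr (\<lambda>x A. letter_mat \<rho> x ** A) w (mat 1)"

definition is_SL2_rep :: "(nat \<Rightarrow> int) \<Rightarrow> (nat \<Rightarrow> int) \<Rightarrow> (gen \<Rightarrow> cmat) \<Rightarrow> bool" where
  "is_SL2_rep p q \<rho> \<longleftrightarrow> (\<forall>g. det (\<rho> g) = 1) \<and> (\<forall>r \<in> relators p q. rho_word \<rho> r = mat 1)"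

definition is_diagonal :: "cmat \<Rightarrow> bool" where
  "is_diagonal A \<longleftrightarrow> A $ 1 $ 2 = 0 \<and> A $ 2 $ 1 = 0"

definition diagonal_rep :: "(gen \<Rightarrow> cmat) \<Rightarrow> bool" where
  "diagonal_rep \<rho> \<longleftrightarrow> (\<forall>g. is_diagonal (\<rho> g))"

definition exceptional :: "(gen \<Rightarrow> cmat) \<Rightarrow> bool" where
  "exceptional \<rho> \<longleftrightarrow> (\<rho> H = mat 1 \<or> \<rho> H = - mat 1) \<and>
     (\<forall>i \<in> {1,2,3::nat}. \<rho> (cg i) \<noteq> mat 1 \<and> \<rho> (cg i) \<noteq> - mat 1)"

definition sl2 :: "cmat set" where
  "sl2 = {A. trace A = 0}"

definition Ad :: "cmat \<Rightarrow> cmat \<Rightarrow> cmat" where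
  "Ad P A = P ** A ** matrix_inv P"

definition csmult :: "complex \<Rightarrow> cmat \<Rightarrow> cmat" where
  "csmult c A = (\<chi> i j. c * A $ i $ j)"

text \<open>Cocycles and coboundaries, as functions on pi_1(M) (i.e. functions on words
  that are constant on pi_1-classes).\<close>
definition Z1 :: "(nat \<Rightarrow> int) \<Rightarrow> (nat \<Rightarrow> int) \<Rightarrow> (gen \<Rightarrow> cmat) \<Rightarrow> (word \<Rightarrow> cmat) set" where
  "Z1 p q \<rho> = {\<epsilon>. (\<forall>w. \<epsilon> w \<in> sl2) \<and> (\<forall>u v. pi1_eq p q u v \<longrightarrow> \<epsilon> u = \<epsilon> v) \<and>
       (\<forall>u v. \<epsilon> (u @ v) = \<epsilon> u + Ad (rho_word \<rho> u) (\<epsilon> v))}"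

definition B1 :: "(gen \<Rightarrow> cmat) \<Rightarrow> (word \<Rightarrow> cmat) set" where
  "B1 \<rho> = {(\<lambda>w. A - Ad (rho_word \<rho> w) A) | A. A \<in> sl2}"

text \<open>Complex dimension of the quotient space Z/B equals n: there are n elements of Z
  whose classes form a C-basis of Z/B.\<close>
definition lincomb :: "complex list \<Rightarrow> (word \<Rightarrow> cmat) list \<Rightarrow> word \<Rightarrow> cmat" where
  "lincomb cs es = (\<lambda>w. \<Sum>i<length es. csmult (cs ! i) ((es ! i) w))"

definition quot_dim_eq :: "nat \<Rightarrow> (word \<Rightarrow> cmat) set \<Rightarrow> (word \<Rightarrow> cmat) set \<Rightarrow> bool" where
  "quot_dim_eq n Z B \<longleftrightarrow> (\<exists>es. length es = n \<and> set es \<subseteq> Z \<and>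
     (\<forall>\<epsilon>\<in>Z. \<exists>cs. length cs = n \<and> \<epsilon> - lincomb cs es \<in> B) \<and>
     (\<forall>cs. length cs = n \<and> lincomb cs es \<in> B \<longrightarrow> (\<forall>c \<in> set cs. c = 0)))"

definition H1_dim :: "(nat \<Rightarrow> int) \<Rightarrow> (nat \<Rightarrow> int) \<Rightarrow> (gen \<Rightarrow> cmat) \<Rightarrow> nat \<Rightarrow> bool" where
  "H1_dim p q \<rho> n \<longleftrightarrow> quot_dim_eq n (Z1 p q \<rho>) (B1 \<rho>)"

end

theory Submission
  imports Defs
begin

definition dg :: "complex \<Rightarrow> cmat" where
  "dg x = (\<chi> i j. if i = j then (if i = 1 then x else inverse x) else 0)"

lemma dg_entries[simp]: "dg x $ 1 $ 1 = x" "dg x $ 1 $ 2 = 0" "dg x $ 2 $ 1 = 0" "dg x $ 2 $ 2 = inverse x"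
  by (simp_all add: dg_def)

lemma mat_eqI: "(A::cmat) $ 1 $ 1 = B $ 1 $ 1 \<Longrightarrow> A $ 1 $ 2 = B $ 1 $ 2 \<Longrightarrow> A $ 2 $ 1 = B $ 2 $ 1 \<Longrightarrow> A $ 2 $ 2 = B $ 2 $ 2 \<Longrightarrow> A = B"
  by (simp add: vec_eq_iff forall_2)

lemma mult_entries: "((A::cmat) ** B) $ i $ j = A $ i $ 1 * B $ 1 $ j + A $ i $ 2 * B $ 2 $ j"
  by (simp add: matrix_matrix_mult_def sum_2)

lemma dg_mult: "dg x ** dg y = dg (x * y)"
  by (rule mat_eqI) (simp_all add: mult_entries)

lemma dg_1: "dg 1 = mat 1"
  by (rule mat_eqI) (simp_all add: mat_def)

lemma mat1_entries[simp]: "(mat 1 :: cmat) $ 1 $ 1 = 1" "(mat 1 :: cmat) $ 1 $ 2 = 0" "(mat 1 :: cmat) $ 2 $ 1 = 0" "(mat 1 :: cmat) $ 2 $ 2 = 1"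
  by (simp_all add: mat_def)

lemma matrix_inv_dg: assumes "x \<noteq> 0" shows "matrix_inv (dg x) = dg (inverse x)"
proof -
  have ex: "dg x ** dg (inverse x) = mat 1 \<and> dg (inverse x) ** dg x = mat 1"
    using assms by (simp add: dg_mult dg_1[symmetric])
  define A' where "A' = matrix_inv (dg x)"
  have h: "dg x ** A' = mat 1 \<and> A' ** dg x = mat 1"
    unfolding A'_def matrix_inv_def by (rule someI, rule ex)
  have "A' = (dg (inverse x) ** dg x) ** A'" using ex by (simp add: matrix_mul_lid)
  also have "\<dots> = dg (inverse x) ** (dg x ** A')" by (simp add: matrix_mul_assoc)
  also have "\<dots> = dg (inverse x)" using h by (simp add: matrix_mul_rid)
  finally show ?thesis unfolding A'_def .
qed

lemma Ad_dg: assumes "x \<noteq> 0" shows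
  "Ad (dg x) A $ 1 $ 1 = A $ 1 $ 1" "Ad (dg x) A $ 1 $ 2 = x^2 * A $ 1 $ 2"
  "Ad (dg x) A $ 2 $ 1 = inverse (x^2) * A $ 2 $ 1" "Ad (dg x) A $ 2 $ 2 = A $ 2 $ 2"
  using assms by (simp_all add: Ad_def matrix_inv_dg mult_entries power2_eq_square field_simps)

lemma diag_is_dg: assumes "is_diagonal A" "det A = 1" shows "A = dg (A $ 1 $ 1)" "A $ 1 $ 1 \<noteq> 0"
proof -
  have d: "A$1$1 * A$2$2 = 1" using assms by (simp add: det_2 is_diagonal_def)
  then show "A $ 1 $ 1 \<noteq> 0" by auto
  have n: "A $ 1 $ 1 \<noteq> 0" using d by auto
  have "A $ 2 $ 2 = inverse (A $ 1 $ 1)" using d n by (simp add: field_simps)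
  then show "A = dg (A $ 1 $ 1)" using assms by (intro mat_eqI) (auto simp: is_diagonal_def)
qed

lemma trace2: "trace (A::cmat) = A$1$1 + A$2$2" by (simp add: trace_def sum_2)


definition lm :: "(gen \<Rightarrow> complex) \<Rightarrow> gen \<times> bool \<Rightarrow> complex" where
  "lm m x = (if snd x then m (fst x) else inverse (m (fst x)))"

definition MM :: "(gen \<Rightarrow> complex) \<Rightarrow> word \<Rightarrow> complex" where
  "MM m w = prod_list (map (lm m) w)"

lemma MM_simps[simp]: "MM m [] = 1" "MM m (x # w) = lm m x * MM m w" "MM m (u @ w) = MM m u * MM m w"
  by (simp_all add: MM_def)

lemma lm_simps[simp]: "lm m (g, True) = m g" "lm m (g, False) = inverse (m g)"
  by (simp_all add: lm_def)

definition th :: "(gen \<Rightarrow> complex) \<Rightarrow> (word \<Rightarrow> complex) \<Rightarrow> bool" where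
  "th m f \<longleftrightarrow> (\<forall>u v. f (u @ v) = f u + MM m u * f v) \<and> (\<forall>g. f [(g, True), (g, False)] = 0)"

locale nz = fixes m :: "gen \<Rightarrow> complex" assumes nz: "\<And>g. m g \<noteq> 0"
begin

lemma MM_nz: "MM m w \<noteq> 0"
  by (induction w) (auto simp: lm_def nz)

lemma th_nil: assumes "th m f" shows "f [] = 0"
proof -
  have "f ([] @ []) = f [] + MM m [] * f []" using assms th_def by blast
  then show ?thesis by simp
qed

lemma th_cons: assumes "th m f" shows "f (x # w) = f [x] + lm m x * f w"
proof -
  have "f ([x] @ w) = f [x] + MM m [x] * f w" using assms th_def by blast
  then show ?thesis by simp
qed

lemma th_inv: assumes "th m f" shows "f [(g, False)] = - f [(g, True)] / m g"
proof -
  have "f [(g, True), (g, False)] = 0" using assms th_def by blast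
  then have "f [(g,True)] + m g * f [(g, False)] = 0" using th_cons[OF assms, of "(g,True)" "[(g,False)]"] by simp
  then have "m g * f [(g, False)] = - f [(g,True)]" by (simp add: eq_neg_iff_add_eq_0 add.commute)
  then show ?thesis using nz[of g] by (metis minus_divide_left nonzero_mult_div_cancel_left)
qed

lemma th_cancel: assumes "th m f" shows "f [(g, b), (g, \<not> b)] = 0"
proof (cases b)
  case True then show ?thesis using assms th_def by auto
next
  case False
  have "f [(g,False),(g,True)] = f [(g,False)] + inverse (m g) * f [(g,True)]"
    using th_cons[OF assms, of "(g,False)" "[(g,True)]"] by simp
  also have "\<dots> = 0" using th_inv[OF assms, of g] nz[of g] by (simp add: divide_inverse)
  finally show ?thesis using False by simp
qed

lemma th_lin: "th m f \<Longrightarrow> th m g \<Longrightarrow> th m (\<lambda>w. f w - c * g w)"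
  unfolding th_def by (simp add: algebra_simps)

lemma th_cob: assumes "th m f" "\<And>g. f [(g, True)] = y - m g * y" shows "f w = y - MM m w * y"
proof (induction w)
  case Nil then show ?case using th_nil[OF assms(1)] by simp
next
  case (Cons x w)
  obtain g b where x: "x = (g, b)" by force
  have fx: "f [x] = y - lm m x * y"
  proof (cases b)
    case True then show ?thesis using x assms(2)[of g] by simp
  next
    case False
    have "f [x] = - (y - m g * y) / m g" using x False assms(2)[of g] th_inv[OF assms(1), of g] by simp
    also have "\<dots> = y - inverse (m g) * y" using nz[of g] by (simp add: field_simps)
    finally show ?thesis using x False by simp
  qed
  show ?case using th_cons[OF assms(1), of x w] fx Cons by (simp add: algebra_simps)
qed

lemma gsum_Suc: "(\<Sum>j<Suc n. (x::complex) ^ j) = 1 + x * (\<Sum>j<n. x ^ j)"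
proof (induction n)
  case 0 then show ?case by simp
next
  case (Suc n)
  have "(\<Sum>j<Suc (Suc n). x ^ j) = (\<Sum>j<Suc n. x ^ j) + x ^ Suc n" by simp
  also have "\<dots> = 1 + x * (\<Sum>j<n. x ^ j) + x * x ^ n" using Suc by simp
  also have "\<dots> = 1 + x * (\<Sum>j<Suc n. x ^ j)" by (simp add: distrib_left)
  finally show ?case .
qed

lemma th_rep: assumes "th m f" shows "f (replicate n (g, True)) = (\<Sum>j<n. m g ^ j) * f [(g, True)]"
proof (induction n)
  case 0 then show ?case using th_nil[OF assms] by simp
next
  case (Suc n)
  have "f (replicate (Suc n) (g, True)) = f [(g,True)] + m g * f (replicate n (g, True))"
    using th_cons[OF assms, of "(g,True)" "replicate n (g, True)"] by simp
  also have "\<dots> = (1 + m g * (\<Sum>j<n. m g ^ j)) * f [(g, True)]" using Suc by (simp add: algebra_simps)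
  finally show ?case by (simp only: gsum_Suc)
qed

lemma th_repF: assumes "th m f" "m g = 1" shows "f (replicate n (g, False)) = - of_nat n * f [(g, True)]"
proof (induction n)
  case 0 then show ?case using th_nil[OF assms(1)] by simp
next
  case (Suc n)
  have "f (replicate (Suc n) (g, False)) = f [(g,False)] + f (replicate n (g, False))"
    using th_cons[OF assms(1), of "(g,False)" "replicate n (g, False)"] assms(2) by simp
  also have "\<dots> = - f [(g, True)] + (- of_nat n * f [(g, True)])" using Suc th_inv[OF assms(1), of g] assms(2) by simp
  finally show ?case by (simp add: algebra_simps)
qed

lemma th_pwH: assumes "th m f" "m H = 1" shows "f (pw H k) = of_int k * f [(H, True)]"
proof (cases "0 \<le> k")
  case True
  then show ?thesis using th_rep[OF assms(1), of "nat k" H] assms(2) by (simp add: pw_def)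
next
  case False
  then show ?thesis using th_repF[OF assms, of "nat (-k)"] by (simp add: pw_def)
qed

lemma MM_pw: "k \<ge> 0 \<Longrightarrow> MM m (pw g k) = m g ^ nat k"
  by (simp add: pw_def MM_def prod_list_replicate)

lemma MM_pwH: "m H = 1 \<Longrightarrow> MM m (pw H k) = 1"
  by (simp add: pw_def MM_def prod_list_replicate)

end


abbreviation commr :: "gen \<Rightarrow> word" where
  "commr c \<equiv> [(c, True), (H, True), (c, False), (H, False)]"
abbreviation prodr :: word where
  "prodr \<equiv> [(C1, True), (C2, True), (C3, True)]"

lemma cg_simps[simp]: "cg 1 = C1" "cg 2 = C2" "cg 3 = C3"
  by (simp_all add: numeral_eq_Suc)

lemma relators_iff: "r \<in> relators p q \<longleftrightarrow>
  r = commr C1 \<or> r = commr C2 \<or> r = commr C3 \<or>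
  r = pw C1 (p 1) @ pw H (q 1) \<or> r = pw C2 (p 2) @ pw H (q 2) \<or> r = pw C3 (p 3) @ pw H (q 3) \<or>
  r = prodr"
proof -
  have s3: "\<And>f. {f i | i. i \<in> {1,2,3::nat}} = {f 1, f 2, f 3}" by blast
  show ?thesis unfolding relators_def s3 by auto
qed

context nz begin

lemma th_commr: assumes "th m f" "m H = 1"
  shows "f (commr c) = (m c - 1) * f [(H, True)]"
proof -
  have a: "f (commr c) = f [(c,True)] + m c * f [(H, True), (c, False), (H, False)]"
    using th_cons[OF assms(1), of "(c,True)" "[(H, True), (c, False), (H, False)]"] by simp
  have b: "f [(H, True), (c, False), (H, False)] = f [(H,True)] + f [(c, False), (H, False)]"
    using th_cons[OF assms(1), of "(H,True)" "[(c, False), (H, False)]"] assms(2) by simp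
  have c: "f [(c, False), (H, False)] = f [(c,False)] + inverse (m c) * f [(H, False)]"
    using th_cons[OF assms(1), of "(c,False)" "[(H,False)]"] by simp
  have d: "f [(H, False)] = - f [(H,True)]" using th_inv[OF assms(1), of H] assms(2) by simp
  have e: "f [(c, False)] = - f [(c,True)] / m c" using th_inv[OF assms(1), of c] by simp
  have "f (commr c) = f [(c,True)] + m c * (f [(H,True)] + (- f [(c,True)] / m c + inverse (m c) * (- f [(H,True)])))"
    using a b c d e by simp
  also have "\<dots> = (m c - 1) * f [(H, True)]" using nz[of c] by (simp add: field_simps)
  finally show ?thesis .
qed

lemma th_prodr: assumes "th m f"
  shows "f prodr = f [(C1, True)] + m C1 * f [(C2, True)] + m C1 * m C2 * f [(C3, True)]"
proof -
  have a: "f prodr = f [(C1,True)] + m C1 * f [(C2, True), (C3, True)]"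
    using th_cons[OF assms(1), of "(C1,True)" "[(C2, True), (C3, True)]"] by simp
  have b: "f [(C2, True), (C3, True)] = f [(C2,True)] + m C2 * f [(C3, True)]"
    using th_cons[OF assms(1), of "(C2,True)" "[(C3, True)]"] by simp
  show ?thesis using a b by (simp add: algebra_simps)
qed

lemma th_powr: assumes "th m f" "m H = 1" "k \<ge> 1"
  shows "f (pw c k @ pw H l) = (\<Sum>j<nat k. m c ^ j) * f [(c, True)] + m c ^ nat k * of_int l * f [(H, True)]"
  "MM m (pw c k @ pw H l) = m c ^ nat k"
proof -
  have "f (pw c k @ pw H l) = f (pw c k) + MM m (pw c k) * f (pw H l)"
    using assms(1) th_def by blast
  then show "f (pw c k @ pw H l) = (\<Sum>j<nat k. m c ^ j) * f [(c, True)] + m c ^ nat k * of_int l * f [(H, True)]"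
    using assms th_rep[OF assms(1), of "nat k" c] th_pwH[OF assms(1,2), of l] MM_pw[of k c]
    by (simp add: pw_def)
  show "MM m (pw c k @ pw H l) = m c ^ nat k" using assms MM_pw[of k c] MM_pwH[of l] by simp
qed

lemma MM_commr: "m H = 1 \<Longrightarrow> MM m (commr c) = 1"
  using nz[of c] by simp

lemma MM_cancel: "MM m [(g, b), (g, \<not> b)] = 1"
  using nz[of g] by (cases b) auto

lemma lm_cancel: "lm m (g, b) * lm m (g, \<not> b) = 1"
  using nz[of g] by (cases b) auto

lemma th_pi1: assumes "th m f" "\<forall>r\<in>relators p q. f r = 0 \<and> MM m r = 1" "pi1_eq p q u v"
  shows "f u = f v"
  using assms(3)
proof (induction rule: pi1_eq.induct)
  case (cancel u g b v)
  have e1: "f (u @ ([(g, b), (g, \<not> b)] @ v)) = f u + MM m u * f ([(g, b), (g, \<not> b)] @ v)"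
    using assms(1) unfolding th_def by blast
  have e2: "f ([(g, b), (g, \<not> b)] @ v) = f [(g, b), (g, \<not> b)] + MM m [(g, b), (g, \<not> b)] * f v"
    using assms(1) unfolding th_def by blast
  have e3: "f (u @ v) = f u + MM m u * f v"
    using assms(1) unfolding th_def by blast
  show ?case using e1 e2 e3 th_cancel[OF assms(1), of g b] MM_cancel[of g b] by simp
next
  case (rel r u v)
  have e1: "f (u @ (r @ v)) = f u + MM m u * f (r @ v)"
    using assms(1) unfolding th_def by blast
  have e2: "f (r @ v) = f r + MM m r * f v"
    using assms(1) unfolding th_def by blast
  have e3: "f (u @ v) = f u + MM m u * f v"
    using assms(1) unfolding th_def by blast
  show ?case using e1 e2 e3 rel assms(2) by simp
qed auto

lemma MM_pi1: assumes "\<forall>r\<in>relators p q. MM m r = 1" "pi1_eq p q u v"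
  shows "MM m u = MM m v"
  using assms(2)
  by (induction rule: pi1_eq.induct) (auto simp: lm_cancel assms(1))

end

fun tw :: "(gen \<Rightarrow> complex) \<Rightarrow> (gen \<Rightarrow> complex) \<Rightarrow> word \<Rightarrow> complex" where
  "tw m v [] = 0"
| "tw m v (x # w) = (if snd x then v (fst x) else - v (fst x) / m (fst x)) + lm m x * tw m v w"

lemma (in nz) th_tw: "th m (tw m v)"
proof -
  have "tw m v (u @ w) = tw m v u + MM m u * tw m v w" for u w
    by (induction u) (auto simp: algebra_simps)
  moreover have "tw m v [(g, True), (g, False)] = 0" for g
    using nz[of g] by simp
  ultimately show ?thesis unfolding th_def by blast
qed

lemma tw_single[simp]: "tw m v [(g, True)] = v g" by simp

lemma gsum_root: assumes "(x::complex) ^ n = 1" "n \<ge> 1"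
  shows "(\<Sum>j<n. x ^ j) = (if x = 1 then of_nat n else 0)"
  using assms by (simp add: sum_gp_strict)


lemma core_fH:
  fixes u1 u2 u3 f1 f2 f3 fH :: complex and P1 P2 P3 Q1 Q2 Q3 :: int
  assumes P: "P1 \<ge> 1" "P2 \<ge> 1" "P3 \<ge> 1"
    and U: "u1 ^ nat P1 = 1" "u2 ^ nat P2 = 1" "u3 ^ nat P3 = 1"
    and C: "(u1 - 1) * fH = 0" "(u2 - 1) * fH = 0" "(u3 - 1) * fH = 0"
    and S: "(\<Sum>j<nat P1. u1 ^ j) * f1 + of_int Q1 * fH = 0"
           "(\<Sum>j<nat P2. u2 ^ j) * f2 + of_int Q2 * fH = 0"
           "(\<Sum>j<nat P3. u3 ^ j) * f3 + of_int Q3 * fH = 0"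
    and R: "f1 + u1 * f2 + u1 * u2 * f3 = 0"
    and e: "of_int Q1 / of_int P1 + of_int Q2 / of_int P2 + of_int Q3 / of_int P3 \<noteq> (0::complex)"
  shows "fH = 0 \<and> (u1 = 1 \<longrightarrow> f1 = 0) \<and> (u2 = 1 \<longrightarrow> f2 = 0) \<and> (u3 = 1 \<longrightarrow> f3 = 0)"
proof -
  have g1: "(\<Sum>j<nat P1. u1 ^ j) = (if u1 = 1 then of_int P1 else 0)"
    using gsum_root[OF U(1)] P(1) by simp
  have g2: "(\<Sum>j<nat P2. u2 ^ j) = (if u2 = 1 then of_int P2 else 0)"
    using gsum_root[OF U(2)] P(2) by simp
  have g3: "(\<Sum>j<nat P3. u3 ^ j) = (if u3 = 1 then of_int P3 else 0)"
    using gsum_root[OF U(3)] P(3) by simp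
  have p0: "(of_int P1::complex) \<noteq> 0" "(of_int P2::complex) \<noteq> 0" "(of_int P3::complex) \<noteq> 0"
    using P by auto
  have fH: "fH = 0"
  proof (cases "u1 = 1 \<and> u2 = 1 \<and> u3 = 1")
    case True
    then have a: "of_int P1 * f1 + of_int Q1 * fH = 0" "of_int P2 * f2 + of_int Q2 * fH = 0"
      "of_int P3 * f3 + of_int Q3 * fH = 0" "f1 + f2 + f3 = 0"
      using S g1 g2 g3 R by auto
    have b1: "f1 = - (of_int Q1 / of_int P1) * fH" using a(1) p0(1) by (simp add: field_simps add_eq_0_iff2)
    have b2: "f2 = - (of_int Q2 / of_int P2) * fH" using a(2) p0(2) by (simp add: field_simps add_eq_0_iff2)
    have b3: "f3 = - (of_int Q3 / of_int P3) * fH" using a(3) p0(3) by (simp add: field_simps add_eq_0_iff2)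
    have "(of_int Q1 / of_int P1 + of_int Q2 / of_int P2 + of_int Q3 / of_int P3) * fH = - (f1 + f2 + f3)"
      unfolding b1 b2 b3 by (simp add: algebra_simps)
    then have "(of_int Q1 / of_int P1 + of_int Q2 / of_int P2 + of_int Q3 / of_int P3) * fH = 0"
      using a(4) by simp
    then show ?thesis using e by simp
  next
    case False
    then show ?thesis using C by auto
  qed
  show ?thesis using fH S g1 g2 g3 p0 by auto
qed

lemma yl: assumes "(u::complex) \<noteq> 1" shows "f = f / (1 - u) - u * (f / (1 - u))"
proof -
  have "f / (1 - u) - u * (f / (1 - u)) = (1 - u) * (f / (1 - u))" by (simp only: left_diff_distrib mult_1_left)
  then show ?thesis using assms by simp
qed

lemma coreA:
  fixes u1 u2 u3 f1 f2 f3 :: complex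
  assumes M: "u1 * u2 * u3 = 1"
    and Z: "u1 = 1 \<longrightarrow> f1 = 0" "u2 = 1 \<longrightarrow> f2 = 0" "u3 = 1 \<longrightarrow> f3 = 0"
    and O: "u1 = 1 \<or> u2 = 1 \<or> u3 = 1"
    and R: "f1 + u1 * f2 + u1 * u2 * f3 = 0"
  shows "\<exists>y. f1 = y - u1 * y \<and> f2 = y - u2 * y \<and> f3 = y - u3 * y"
proof -
  have nz: "u1 \<noteq> 0" "u2 \<noteq> 0" "u3 \<noteq> 0" using M by auto
  show ?thesis
  proof (cases "u1 = 1")
    case False
    define y where "y = f1 / (1 - u1)"
    have y1: "f1 = y - u1 * y" using yl[OF False] unfolding y_def .
    show ?thesis
    proof (cases "u2 = 1")
      case u2: True
      then have f2: "f2 = 0" using Z by simp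
      have u13: "u1 * u3 = 1" using M u2 by simp
      have f3: "f3 = - f1 / u1" using R u2 f2 nz by (simp add: field_simps add_eq_0_iff2)
      have u3e: "u3 = inverse u1" using u13 nz by (simp add: field_simps)
      have "f3 = y - u3 * y" using f3 nz unfolding y1 u3e by (simp add: field_simps)
      then show ?thesis using y1 f2 u2 by auto
    next
      case u2: False
      then have u3: "u3 = 1" using O False by simp
      then have f3: "f3 = 0" using Z by simp
      have u12: "u2 = inverse u1" using M u3 nz by (simp add: field_simps)
      have f2: "f2 = - f1 / u1" using R f3 nz by (simp add: field_simps add_eq_0_iff2)
      have "f2 = y - u2 * y" using f2 nz unfolding y1 u12 by (simp add: field_simps)
      then show ?thesis using y1 f3 u3 by auto
    qed
  next
    case u1: True
    then have f1: "f1 = 0" using Z by simp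
    show ?thesis
    proof (cases "u2 = 1")
      case True
      then have "u3 = 1" using M u1 by simp
      then show ?thesis using Z u1 True by (intro exI[of _ 0]) auto
    next
      case False
      define y where "y = f2 / (1 - u2)"
      have y2: "f2 = y - u2 * y" using yl[OF False] unfolding y_def .
      have u3: "u3 = inverse u2" using M u1 nz by (simp add: field_simps)
      have f3: "f3 = - f2 / u2" using R f1 u1 nz by (simp add: field_simps add_eq_0_iff2)
      have "f3 = y - u3 * y" using f3 nz unfolding y2 u3 by (simp add: field_simps)
      then show ?thesis using y2 f1 u1 by auto
    qed
  qed
qed

lemma coreB:
  fixes u1 u2 u3 f1 f2 f3 :: complex
  assumes M: "u1 * u2 * u3 = 1" and N: "u1 \<noteq> 1"
    and R: "f1 + u1 * f2 + u1 * u2 * f3 = 0"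
  shows "f3 - (f2 - (1 - u2) * (f1 / (1 - u1))) * (- inverse u2) = f1 / (1 - u1) - u3 * (f1 / (1 - u1))"
proof -
  have nz: "u1 \<noteq> 0" "u2 \<noteq> 0" "u3 \<noteq> 0" using M by auto
  have u3: "u3 = inverse (u1 * u2)" using M nz by (simp add: field_simps)
  define y where "y = f1 / (1 - u1)"
  have y1: "f1 = y - u1 * y" using yl[OF N] unfolding y_def .
  have "u1 * u2 * f3 = - (f1 + u1 * f2)" using R by (simp add: algebra_simps eq_neg_iff_add_eq_0)
  then have f3: "f3 = - (f1 + u1 * f2) / (u1 * u2)" using nz by (simp add: field_simps)
  have "f3 - (f2 - (1 - u2) * y) * (- inverse u2) = y - u3 * y"
    unfolding f3 u3 y1 using nz by (simp add: field_simps)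
  then show ?thesis unfolding y_def .
qed


definition vb :: "(gen \<Rightarrow> complex) \<Rightarrow> gen \<Rightarrow> complex" where
  "vb m g = (case g of C1 \<Rightarrow> 0 | C2 \<Rightarrow> 1 | C3 \<Rightarrow> - inverse (m C2) | H \<Rightarrow> 0)"

context nz begin

lemma th_facts:
  assumes th: "th m f" and mH: "m H = 1" and rel: "\<forall>r\<in>relators p q. MM m r = 1"
    and P: "p 1 \<ge> 1" "p 2 \<ge> 1" "p 3 \<ge> 1"
  shows "m C1 * m C2 * m C3 = 1"
    "m C1 ^ nat (p 1) = 1" "m C2 ^ nat (p 2) = 1" "m C3 ^ nat (p 3) = 1"
    "(\<forall>r\<in>relators p q. f r = 0) \<longleftrightarrow>
      (m C1 - 1) * f [(H, True)] = 0 \<and> (m C2 - 1) * f [(H, True)] = 0 \<and> (m C3 - 1) * f [(H, True)] = 0 \<and>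
      (\<Sum>j<nat (p 1). m C1 ^ j) * f [(C1, True)] + of_int (q 1) * f [(H, True)] = 0 \<and>
      (\<Sum>j<nat (p 2). m C2 ^ j) * f [(C2, True)] + of_int (q 2) * f [(H, True)] = 0 \<and>
      (\<Sum>j<nat (p 3). m C3 ^ j) * f [(C3, True)] + of_int (q 3) * f [(H, True)] = 0 \<and>
      f [(C1, True)] + m C1 * f [(C2, True)] + m C1 * m C2 * f [(C3, True)] = 0" (is "?L5 \<longleftrightarrow> ?R5")
proof -
  have r1: "pw C1 (p 1) @ pw H (q 1) \<in> relators p q" "pw C2 (p 2) @ pw H (q 2) \<in> relators p q"
    "pw C3 (p 3) @ pw H (q 3) \<in> relators p q" "prodr \<in> relators p q"
    "commr C1 \<in> relators p q" "commr C2 \<in> relators p q" "commr C3 \<in> relators p q"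
    by (simp_all only: relators_iff) simp_all
  have mp1: "m C1 ^ nat (p 1) = 1" using rel r1(1) th_powr(2)[OF th mH P(1)] by metis
  have mp2: "m C2 ^ nat (p 2) = 1" using rel r1(2) th_powr(2)[OF th mH P(2)] by metis
  have mp3: "m C3 ^ nat (p 3) = 1" using rel r1(3) th_powr(2)[OF th mH P(3)] by metis
  have "MM m prodr = 1" using rel r1(4) by blast
  then show "m C1 * m C2 * m C3 = 1" by (simp add: mult.assoc)
  show "m C1 ^ nat (p 1) = 1" "m C2 ^ nat (p 2) = 1" "m C3 ^ nat (p 3) = 1" using mp1 mp2 mp3 .
  have e1: "f (pw C1 (p 1) @ pw H (q 1)) = (\<Sum>j<nat (p 1). m C1 ^ j) * f [(C1, True)] + of_int (q 1) * f [(H, True)]"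
    using th_powr(1)[OF th mH P(1), of C1 "q 1"] mp1 by simp
  have e2: "f (pw C2 (p 2) @ pw H (q 2)) = (\<Sum>j<nat (p 2). m C2 ^ j) * f [(C2, True)] + of_int (q 2) * f [(H, True)]"
    using th_powr(1)[OF th mH P(2), of C2 "q 2"] mp2 by simp
  have e3: "f (pw C3 (p 3) @ pw H (q 3)) = (\<Sum>j<nat (p 3). m C3 ^ j) * f [(C3, True)] + of_int (q 3) * f [(H, True)]"
    using th_powr(1)[OF th mH P(3), of C3 "q 3"] mp3 by simp
  have c1: "f (commr C1) = (m C1 - 1) * f [(H, True)]" using th_commr[OF th mH] .
  have c2: "f (commr C2) = (m C2 - 1) * f [(H, True)]" using th_commr[OF th mH] .
  have c3: "f (commr C3) = (m C3 - 1) * f [(H, True)]" using th_commr[OF th mH] .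
  have pr: "f prodr = f [(C1, True)] + m C1 * f [(C2, True)] + m C1 * m C2 * f [(C3, True)]"
    using th_prodr[OF th] .
  show "?L5 \<longleftrightarrow> ?R5"
    apply (rule iffI)
    subgoal premises L
    proof -
      have z: "f (commr C1) = 0" "f (commr C2) = 0" "f (commr C3) = 0" "f prodr = 0"
        "f (pw C1 (p 1) @ pw H (q 1)) = 0" "f (pw C2 (p 2) @ pw H (q 2)) = 0" "f (pw C3 (p 3) @ pw H (q 3)) = 0"
        using L r1 by blast+
      show ?thesis
        apply (intro conjI)
        using z(1) c1 apply simp
        using z(2) c2 apply simp
        using z(3) c3 apply simp
        using z(5) e1 apply simp
        using z(6) e2 apply simp
        using z(7) e3 apply simp
        using z(4) pr apply simp
        done
    qed
    subgoal premises R
    proof (intro ballI)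
      fix r assume "r \<in> relators p q"
      then show "f r = 0" unfolding relators_iff using R c1 c2 c3 e1 e2 e3 pr by (elim disjE) simp_all
    qed
    done
qed

lemma th_nonexc:
  assumes th: "th m f" and mH: "m H = 1" and rel: "\<forall>r\<in>relators p q. MM m r = 1"
    and P: "p 1 \<ge> 1" "p 2 \<ge> 1" "p 3 \<ge> 1"
    and e: "of_int (q 1) / of_int (p 1) + of_int (q 2) / of_int (p 2) + of_int (q 3) / of_int (p 3) \<noteq> (0::complex)"
    and fr: "\<forall>r\<in>relators p q. f r = 0"
    and O: "m C1 = 1 \<or> m C2 = 1 \<or> m C3 = 1"
  shows "\<exists>y. \<forall>w. f w = y - MM m w * y"
proof -
  note F = th_facts[OF th mH rel P]
  have R: "(m C1 - 1) * f [(H, True)] = 0 \<and> (m C2 - 1) * f [(H, True)] = 0 \<and> (m C3 - 1) * f [(H, True)] = 0 \<and>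
      (\<Sum>j<nat (p 1). m C1 ^ j) * f [(C1, True)] + of_int (q 1) * f [(H, True)] = 0 \<and>
      (\<Sum>j<nat (p 2). m C2 ^ j) * f [(C2, True)] + of_int (q 2) * f [(H, True)] = 0 \<and>
      (\<Sum>j<nat (p 3). m C3 ^ j) * f [(C3, True)] + of_int (q 3) * f [(H, True)] = 0 \<and>
      f [(C1, True)] + m C1 * f [(C2, True)] + m C1 * m C2 * f [(C3, True)] = 0"
    using F(5) fr by blast
  have Z: "f [(H, True)] = 0 \<and> (m C1 = 1 \<longrightarrow> f [(C1, True)] = 0) \<and> (m C2 = 1 \<longrightarrow> f [(C2, True)] = 0) \<and> (m C3 = 1 \<longrightarrow> f [(C3, True)] = 0)"
    using core_fH[OF P F(2) F(3) F(4), of "f [(H, True)]" "f [(C1, True)]" "q 1" "f [(C2, True)]" "q 2" "f [(C3, True)]" "q 3"] R e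
    by blast
  obtain y where y: "f [(C1, True)] = y - m C1 * y" "f [(C2, True)] = y - m C2 * y" "f [(C3, True)] = y - m C3 * y"
    using coreA[OF F(1), of "f [(C1, True)]" "f [(C2, True)]" "f [(C3, True)]"] Z O R by blast
  have "\<And>g. f [(g, True)] = y - m g * y"
  proof -
    fix g show "f [(g, True)] = y - m g * y" using y Z mH by (cases g) auto
  qed
  then show ?thesis using th_cob[OF th] by blast
qed

lemma th_exc:
  assumes th: "th m f" and mH: "m H = 1" and rel: "\<forall>r\<in>relators p q. MM m r = 1"
    and P: "p 1 \<ge> 1" "p 2 \<ge> 1" "p 3 \<ge> 1"
    and fr: "\<forall>r\<in>relators p q. f r = 0"
    and O: "m C1 \<noteq> 1" "m C2 \<noteq> 1" "m C3 \<noteq> 1"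
  shows "\<exists>y c. \<forall>w. f w - c * tw m (vb m) w = y - MM m w * y"
proof -
  note F = th_facts[OF th mH rel P]
  have R: "(m C1 - 1) * f [(H, True)] = 0 \<and> (m C2 - 1) * f [(H, True)] = 0 \<and> (m C3 - 1) * f [(H, True)] = 0 \<and>
      (\<Sum>j<nat (p 1). m C1 ^ j) * f [(C1, True)] + of_int (q 1) * f [(H, True)] = 0 \<and>
      (\<Sum>j<nat (p 2). m C2 ^ j) * f [(C2, True)] + of_int (q 2) * f [(H, True)] = 0 \<and>
      (\<Sum>j<nat (p 3). m C3 ^ j) * f [(C3, True)] + of_int (q 3) * f [(H, True)] = 0 \<and>
      f [(C1, True)] + m C1 * f [(C2, True)] + m C1 * m C2 * f [(C3, True)] = 0"
    using F(5) fr by blast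
  have fH: "f [(H, True)] = 0" using R O(1) by simp
  define y where "y = f [(C1, True)] / (1 - m C1)"
  define c where "c = f [(C2, True)] - (1 - m C2) * y"
  have g3: "f [(C3, True)] - c * (- inverse (m C2)) = y - m C3 * y"
    using coreB[OF F(1) O(1), of "f [(C1, True)]" "f [(C2, True)]" "f [(C3, True)]"] R
    unfolding c_def y_def by blast
  have g1: "f [(C1, True)] = y - m C1 * y" using yl[OF O(1)] unfolding y_def .
  have g2: "f [(C2, True)] - c = y - m C2 * y" unfolding c_def by (simp add: algebra_simps)
  have "\<And>g. f [(g, True)] - c * tw m (vb m) [(g, True)] = y - m g * y"
  proof -
    fix g show "f [(g, True)] - c * tw m (vb m) [(g, True)] = y - m g * y"
      using g1 g2 g3 fH mH by (cases g) (auto simp: vb_def)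
  qed
  then have "\<forall>w. f w - c * tw m (vb m) w = y - MM m w * y"
    using th_cob[OF th_lin[OF th th_tw]] by blast
  then show ?thesis by blast
qed

lemma tw_rel:
  assumes mH: "m H = 1" and rel: "\<forall>r\<in>relators p q. MM m r = 1"
    and P: "p 1 \<ge> 1" "p 2 \<ge> 1" "p 3 \<ge> 1"
    and O: "m C1 \<noteq> 1" "m C2 \<noteq> 1" "m C3 \<noteq> 1"
  shows "\<forall>r\<in>relators p q. tw m (vb m) r = 0"
proof -
  note F = th_facts[OF th_tw[of "vb m"] mH rel P]
  have s1: "(\<Sum>j<nat (p 1). m C1 ^ j) = 0" using gsum_root[OF F(2)] P O by simp
  have s2: "(\<Sum>j<nat (p 2). m C2 ^ j) = 0" using gsum_root[OF F(3)] P O by simp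
  have s3: "(\<Sum>j<nat (p 3). m C3 ^ j) = 0" using gsum_root[OF F(4)] P O by simp
  have "m C2 \<noteq> 0" using nz by blast
  then have "vb m C1 + m C1 * vb m C2 + m C1 * m C2 * vb m C3 = 0" by (simp add: vb_def)
  then show ?thesis using F(5) s1 s2 s3 by (simp add: vb_def)
qed

end


locale repr =
  fixes p q :: "nat \<Rightarrow> int" and \<rho> :: "gen \<Rightarrow> cmat"
  assumes rep: "is_SL2_rep p q \<rho>" and diag: "diagonal_rep \<rho>"
    and rhoH: "\<rho> H = mat 1 \<or> \<rho> H = - mat 1"
begin

definition \<alpha> :: "gen \<Rightarrow> complex" where "\<alpha> g = \<rho> g $ 1 $ 1"
definition mE :: "gen \<Rightarrow> complex" where "mE g = (\<alpha> g)^2"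
definition mF :: "gen \<Rightarrow> complex" where "mF g = inverse ((\<alpha> g)^2)"
definition m1 :: "gen \<Rightarrow> complex" where "m1 g = 1"

lemma rho_dg: "\<rho> g = dg (\<alpha> g)" "\<alpha> g \<noteq> 0"
  using diag_is_dg[of "\<rho> g"] rep diag unfolding \<alpha>_def is_SL2_rep_def diagonal_rep_def by auto

lemma nz_all: "nz \<alpha>" "nz mE" "nz mF" "nz m1"
  using rho_dg(2) by (unfold_locales) (auto simp: mE_def mF_def m1_def)

lemma letter_dg: "letter_mat \<rho> x = dg (lm \<alpha> x)"
  using rho_dg[of "fst x"] by (auto simp: letter_mat_def lm_def matrix_inv_dg)

lemma rho_word_dg: "rho_word \<rho> w = dg (MM \<alpha> w)"
  by (induction w) (simp_all add: rho_word_def dg_1 letter_dg dg_mult)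

lemma MMa_nz: "MM \<alpha> w \<noteq> 0"
  using nz.MM_nz[OF nz_all(1)] .

lemma MM_E: "MM mE w = (MM \<alpha> w)^2"
  by (induction w) (auto simp: mE_def lm_def power_mult_distrib power_inverse)

lemma MM_F: "MM mF w = inverse ((MM \<alpha> w)^2)"
  by (induction w) (auto simp: mF_def lm_def power_mult_distrib power_inverse)

lemma MM_1: "MM m1 w = 1"
  by (induction w) (auto simp: m1_def lm_def)

lemma rel_a: "\<forall>r\<in>relators p q. MM \<alpha> r = 1"
proof
  fix r assume "r \<in> relators p q"
  then have "rho_word \<rho> r = mat 1" using rep unfolding is_SL2_rep_def by blast
  then have "dg (MM \<alpha> r) $ 1 $ 1 = 1" unfolding rho_word_dg by simp
  then show "MM \<alpha> r = 1" by simp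
qed

lemma rel_all: "\<forall>r\<in>relators p q. MM mE r = 1" "\<forall>r\<in>relators p q. MM mF r = 1" "\<forall>r\<in>relators p q. MM m1 r = 1"
  using rel_a by (simp_all add: MM_E MM_F MM_1)

lemma aH: "\<alpha> H = 1 \<or> \<alpha> H = -1"
  using rhoH unfolding \<alpha>_def by auto

lemma mH: "mE H = 1" "mF H = 1" "m1 H = 1"
  using aH by (auto simp: mE_def mF_def m1_def)

lemma dg_m1: "dg (-1) = - mat 1"
  by (rule mat_eqI) simp_all

lemma pm1_iff: "\<rho> g = mat 1 \<or> \<rho> g = - mat 1 \<longleftrightarrow> mE g = 1"
proof -
  have "\<rho> g = mat 1 \<longleftrightarrow> \<alpha> g = 1"
    by (metis dg_1 dg_entries(1) rho_dg(1))
  moreover have "\<rho> g = - mat 1 \<longleftrightarrow> \<alpha> g = -1"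
    by (metis dg_m1 dg_entries(1) rho_dg(1))
  ultimately show ?thesis unfolding mE_def by (simp add: power2_eq_1_iff)
qed

lemma mF_iff: "mF g = 1 \<longleftrightarrow> mE g = 1"
  unfolding mE_def mF_def by (metis inverse_1 inverse_inverse_eq)

end


definition offd :: "complex \<Rightarrow> complex \<Rightarrow> cmat" where
  "offd y z = (\<chi> i j. if i = j then 0 else if i = 1 then y else z)"

lemma offd_entries[simp]: "offd y z $ 1 $ 1 = 0" "offd y z $ 1 $ 2 = y" "offd y z $ 2 $ 1 = z" "offd y z $ 2 $ 2 = 0"
  by (simp_all add: offd_def)

lemma offd_sl2: "offd y z \<in> sl2" by (simp add: sl2_def trace2)

lemma csmult_entries[simp]: "csmult c A $ i $ j = c * A $ i $ j" by (simp add: csmult_def)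

context repr begin

lemma Ad_rw: "Ad (rho_word \<rho> u) A $ 1 $ 1 = A $ 1 $ 1" "Ad (rho_word \<rho> u) A $ 1 $ 2 = MM mE u * A $ 1 $ 2"
  "Ad (rho_word \<rho> u) A $ 2 $ 1 = MM mF u * A $ 2 $ 1" "Ad (rho_word \<rho> u) A $ 2 $ 2 = A $ 2 $ 2"
  unfolding rho_word_dg MM_E MM_F using Ad_dg[OF MMa_nz[of u]] by simp_all

lemma Z1_coords: assumes "\<epsilon> \<in> Z1 p q \<rho>"
  shows "th m1 (\<lambda>w. \<epsilon> w $ 1 $ 1)" "th mE (\<lambda>w. \<epsilon> w $ 1 $ 2)" "th mF (\<lambda>w. \<epsilon> w $ 2 $ 1)"
    "\<And>w. \<epsilon> w $ 2 $ 2 = - \<epsilon> w $ 1 $ 1" "\<forall>r\<in>relators p q. \<epsilon> r = 0"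
proof -
  have sl: "\<And>w. \<epsilon> w \<in> sl2" and pe: "\<And>u v. pi1_eq p q u v \<Longrightarrow> \<epsilon> u = \<epsilon> v"
    and co: "\<And>u v. \<epsilon> (u @ v) = \<epsilon> u + Ad (rho_word \<rho> u) (\<epsilon> v)"
    using assms unfolding Z1_def by blast+
  show "\<epsilon> w $ 2 $ 2 = - \<epsilon> w $ 1 $ 1" for w
  proof -
    have "\<epsilon> w $ 1 $ 1 + \<epsilon> w $ 2 $ 2 = 0" using sl[of w] unfolding sl2_def trace2 by simp
    then show ?thesis by (simp add: eq_neg_iff_add_eq_0 add.commute)
  qed
  have "\<epsilon> ([] @ []) = \<epsilon> [] + Ad (rho_word \<rho> []) (\<epsilon> [])" using co .
  moreover have "Ad (rho_word \<rho> []) (\<epsilon> []) = \<epsilon> []"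
    by (rule mat_eqI) (simp_all add: Ad_rw MM_E MM_F)
  ultimately have e0: "\<epsilon> [] = 0" by simp
  have "\<epsilon> ([] @ r @ []) = \<epsilon> ([] @ [])" if "r \<in> relators p q" for r
    using pe[OF pi1_eq.rel[OF that]] .
  then show "\<forall>r\<in>relators p q. \<epsilon> r = 0" using e0 by simp
  have canc: "\<epsilon> [(g, True), (g, False)] = 0" for g
  proof -
    have "\<epsilon> ([] @ [(g, True), (g, \<not> True)] @ []) = \<epsilon> ([] @ [])" by (rule pe, rule pi1_eq.cancel)
    then show ?thesis using e0 by simp
  qed
  show "th m1 (\<lambda>w. \<epsilon> w $ 1 $ 1)" unfolding th_def
  proof (intro conjI allI)
    fix u v show "\<epsilon> (u @ v) $ 1 $ 1 = \<epsilon> u $ 1 $ 1 + MM m1 u * \<epsilon> v $ 1 $ 1"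
      unfolding co[of u v] by (simp add: Ad_rw MM_1)
  next
    fix g show "\<epsilon> [(g, True), (g, False)] $ 1 $ 1 = 0" by (simp add: canc)
  qed
  show "th mE (\<lambda>w. \<epsilon> w $ 1 $ 2)" unfolding th_def
  proof (intro conjI allI)
    fix u v show "\<epsilon> (u @ v) $ 1 $ 2 = \<epsilon> u $ 1 $ 2 + MM mE u * \<epsilon> v $ 1 $ 2"
      unfolding co[of u v] by (simp add: Ad_rw)
  next
    fix g show "\<epsilon> [(g, True), (g, False)] $ 1 $ 2 = 0" by (simp add: canc)
  qed
  show "th mF (\<lambda>w. \<epsilon> w $ 2 $ 1)" unfolding th_def
  proof (intro conjI allI)
    fix u v show "\<epsilon> (u @ v) $ 2 $ 1 = \<epsilon> u $ 2 $ 1 + MM mF u * \<epsilon> v $ 2 $ 1"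
      unfolding co[of u v] by (simp add: Ad_rw)
  next
    fix g show "\<epsilon> [(g, True), (g, False)] $ 2 $ 1 = 0" by (simp add: canc)
  qed
qed

lemma B1_sub: "B1 \<rho> \<subseteq> Z1 p q \<rho>"
proof
  fix \<epsilon> assume "\<epsilon> \<in> B1 \<rho>"
  then obtain A where A: "A \<in> sl2" and e: "\<epsilon> = (\<lambda>w. A - Ad (rho_word \<rho> w) A)" unfolding B1_def by blast
  have f1: "\<epsilon> w \<in> sl2" for w unfolding e sl2_def trace2 by (simp add: Ad_rw)
  have f2: "\<epsilon> u = \<epsilon> v" if "pi1_eq p q u v" for u v
    unfolding e rho_word_dg using nz.MM_pi1[OF nz_all(1) rel_a that] by simp
  have f3: "\<epsilon> (u @ v) = \<epsilon> u + Ad (rho_word \<rho> u) (\<epsilon> v)" for u v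
  proof -
    have n: "MM \<alpha> u \<noteq> 0" "MM \<alpha> v \<noteq> 0" using MMa_nz by auto
    show ?thesis unfolding e
      by (rule mat_eqI) (simp_all add: Ad_rw MM_E MM_F algebra_simps power_mult_distrib)
  qed
  show "\<epsilon> \<in> Z1 p q \<rho>" unfolding Z1_def mem_Collect_eq
    using f1 f2 f3 by (intro conjI allI impI) auto
qed

end


lemma lincomb2: "lincomb [c0, c1] [e0, e1] w = csmult c0 (e0 w) + csmult c1 (e1 w)"
  by (simp add: lincomb_def numeral_2_eq_2 lessThan_Suc)

context repr begin

lemma coords_nonexc:
  assumes P: "p 1 \<ge> 1" "p 2 \<ge> 1" "p 3 \<ge> 1"
    and e: "of_int (q 1) / of_int (p 1) + of_int (q 2) / of_int (p 2) + of_int (q 3) / of_int (p 3) \<noteq> (0::complex)"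
    and Z: "\<epsilon> \<in> Z1 p q \<rho>"
  shows "\<forall>w. \<epsilon> w $ 1 $ 1 = 0"
proof -
  note C = Z1_coords[OF Z]
  have fr: "\<forall>r\<in>relators p q. \<epsilon> r $ 1 $ 1 = 0" using C(5) by simp
  obtain y where "\<forall>w. \<epsilon> w $ 1 $ 1 = y - MM m1 w * y"
    using nz.th_nonexc[OF nz_all(4) C(1) mH(3) rel_all(3) P e fr] by (auto simp: m1_def)
  then show ?thesis by (simp add: MM_1)
qed

lemma nonexc:
  assumes P: "p 1 \<ge> 1" "p 2 \<ge> 1" "p 3 \<ge> 1"
    and e: "of_int (q 1) / of_int (p 1) + of_int (q 2) / of_int (p 2) + of_int (q 3) / of_int (p 3) \<noteq> (0::complex)"
    and O: "mE C1 = 1 \<or> mE C2 = 1 \<or> mE C3 = 1"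
  shows "Z1 p q \<rho> = B1 \<rho>"
proof
  show "B1 \<rho> \<subseteq> Z1 p q \<rho>" by (rule B1_sub)
  show "Z1 p q \<rho> \<subseteq> B1 \<rho>"
  proof
    fix \<epsilon> assume Z: "\<epsilon> \<in> Z1 p q \<rho>"
    note C = Z1_coords[OF Z]
    have D: "\<forall>w. \<epsilon> w $ 1 $ 1 = 0" by (rule coords_nonexc[OF P e Z])
    have frE: "\<forall>r\<in>relators p q. \<epsilon> r $ 1 $ 2 = 0" using C(5) by simp
    have frF: "\<forall>r\<in>relators p q. \<epsilon> r $ 2 $ 1 = 0" using C(5) by simp
    obtain yE where yE: "\<forall>w. \<epsilon> w $ 1 $ 2 = yE - MM mE w * yE"
      using nz.th_nonexc[OF nz_all(2) C(2) mH(1) rel_all(1) P e frE O] by blast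
    have OF: "mF C1 = 1 \<or> mF C2 = 1 \<or> mF C3 = 1" using O mF_iff by simp
    obtain yF where yF: "\<forall>w. \<epsilon> w $ 2 $ 1 = yF - MM mF w * yF"
      using nz.th_nonexc[OF nz_all(3) C(3) mH(2) rel_all(2) P e frF OF] by blast
    have "\<epsilon> = (\<lambda>w. offd yE yF - Ad (rho_word \<rho> w) (offd yE yF))"
    proof
      fix w show "\<epsilon> w = offd yE yF - Ad (rho_word \<rho> w) (offd yE yF)"
        by (rule mat_eqI) (simp_all add: Ad_rw D yE yF C(4))
    qed
    then show "\<epsilon> \<in> B1 \<rho>" unfolding B1_def using offd_sl2 by blast
  qed
qed

definition eE :: "word \<Rightarrow> cmat" where "eE w = offd (tw mE (vb mE) w) 0"
definition eF :: "word \<Rightarrow> cmat" where "eF w = offd 0 (tw mF (vb mF) w)"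

lemma eE_Z1:
  assumes P: "p 1 \<ge> 1" "p 2 \<ge> 1" "p 3 \<ge> 1" and O: "mE C1 \<noteq> 1" "mE C2 \<noteq> 1" "mE C3 \<noteq> 1"
  shows "eE \<in> Z1 p q \<rho>"
proof -
  have th: "th mE (tw mE (vb mE))" using nz.th_tw[OF nz_all(2)] .
  have tr: "\<forall>r\<in>relators p q. tw mE (vb mE) r = 0 \<and> MM mE r = 1"
    using nz.tw_rel[OF nz_all(2) mH(1) rel_all(1) P O] rel_all(1) by blast
  have f1: "eE w \<in> sl2" for w unfolding eE_def by (rule offd_sl2)
  have f2: "eE u = eE v" if "pi1_eq p q u v" for u v
    unfolding eE_def using nz.th_pi1[OF nz_all(2) th tr that] by simp
  have f3: "eE (u @ v) = eE u + Ad (rho_word \<rho> u) (eE v)" for u v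
  proof -
    have "tw mE (vb mE) (u @ v) = tw mE (vb mE) u + MM mE u * tw mE (vb mE) v"
      using th unfolding th_def by blast
    then show ?thesis unfolding eE_def by (intro mat_eqI) (simp_all add: Ad_rw)
  qed
  show ?thesis unfolding Z1_def mem_Collect_eq
    using f1 f2 f3 by (intro conjI allI impI) auto
qed

lemma eF_Z1:
  assumes P: "p 1 \<ge> 1" "p 2 \<ge> 1" "p 3 \<ge> 1" and O: "mF C1 \<noteq> 1" "mF C2 \<noteq> 1" "mF C3 \<noteq> 1"
  shows "eF \<in> Z1 p q \<rho>"
proof -
  have th: "th mF (tw mF (vb mF))" using nz.th_tw[OF nz_all(3)] .
  have tr: "\<forall>r\<in>relators p q. tw mF (vb mF) r = 0 \<and> MM mF r = 1"
    using nz.tw_rel[OF nz_all(3) mH(2) rel_all(2) P O] rel_all(2) by blast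
  have f1: "eF w \<in> sl2" for w unfolding eF_def by (rule offd_sl2)
  have f2: "eF u = eF v" if "pi1_eq p q u v" for u v
    unfolding eF_def using nz.th_pi1[OF nz_all(3) th tr that] by simp
  have f3: "eF (u @ v) = eF u + Ad (rho_word \<rho> u) (eF v)" for u v
  proof -
    have "tw mF (vb mF) (u @ v) = tw mF (vb mF) u + MM mF u * tw mF (vb mF) v"
      using th unfolding th_def by blast
    then show ?thesis unfolding eF_def by (intro mat_eqI) (simp_all add: Ad_rw)
  qed
  show ?thesis unfolding Z1_def mem_Collect_eq
    using f1 f2 f3 by (intro conjI allI impI) auto
qed

lemma exc:
  assumes P: "p 1 \<ge> 1" "p 2 \<ge> 1" "p 3 \<ge> 1"
    and e: "of_int (q 1) / of_int (p 1) + of_int (q 2) / of_int (p 2) + of_int (q 3) / of_int (p 3) \<noteq> (0::complex)"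
    and O: "mE C1 \<noteq> 1" "mE C2 \<noteq> 1" "mE C3 \<noteq> 1"
  shows "H1_dim p q \<rho> 2"
proof -
  have OF: "mF C1 \<noteq> 1" "mF C2 \<noteq> 1" "mF C3 \<noteq> 1" using O mF_iff by auto
  have inZ: "set [eE, eF] \<subseteq> Z1 p q \<rho>" using eE_Z1[OF P O] eF_Z1[OF P OF] by simp
  have span: "\<exists>cs. length cs = 2 \<and> \<epsilon> - lincomb cs [eE, eF] \<in> B1 \<rho>" if Z: "\<epsilon> \<in> Z1 p q \<rho>" for \<epsilon>
  proof -
    note C = Z1_coords[OF Z]
    have D: "\<forall>w. \<epsilon> w $ 1 $ 1 = 0" by (rule coords_nonexc[OF P e Z])
    have frE: "\<forall>r\<in>relators p q. \<epsilon> r $ 1 $ 2 = 0" using C(5) by simp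
    have frF: "\<forall>r\<in>relators p q. \<epsilon> r $ 2 $ 1 = 0" using C(5) by simp
    obtain yE cE where yE: "\<forall>w. \<epsilon> w $ 1 $ 2 - cE * tw mE (vb mE) w = yE - MM mE w * yE"
      using nz.th_exc[OF nz_all(2) C(2) mH(1) rel_all(1) P frE O] by blast
    obtain yF cF where yF: "\<forall>w. \<epsilon> w $ 2 $ 1 - cF * tw mF (vb mF) w = yF - MM mF w * yF"
      using nz.th_exc[OF nz_all(3) C(3) mH(2) rel_all(2) P frF OF] by blast
    have "\<epsilon> - lincomb [cE, cF] [eE, eF] = (\<lambda>w. offd yE yF - Ad (rho_word \<rho> w) (offd yE yF))"
    proof
      fix w show "(\<epsilon> - lincomb [cE, cF] [eE, eF]) w = offd yE yF - Ad (rho_word \<rho> w) (offd yE yF)"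
        unfolding fun_diff_def lincomb2 eE_def eF_def
        by (rule mat_eqI) (simp_all add: Ad_rw D yE[rule_format] yF[rule_format] C(4))
    qed
    then have "\<epsilon> - lincomb [cE, cF] [eE, eF] \<in> B1 \<rho>" unfolding B1_def using offd_sl2 by blast
    then show ?thesis by (intro exI[of _ "[cE, cF]"]) simp
  qed
  have indep: "\<forall>c\<in>set cs. c = 0" if L: "length cs = 2" and B: "lincomb cs [eE, eF] \<in> B1 \<rho>" for cs
  proof -
    obtain c0 c1 where cs: "cs = [c0, c1]" using L by (auto simp: numeral_2_eq_2 length_Suc_conv)
    obtain A where A: "lincomb cs [eE, eF] = (\<lambda>w. A - Ad (rho_word \<rho> w) A)" using B unfolding B1_def by blast
    have w1: "lincomb cs [eE, eF] [(C1, True)] = A - Ad (rho_word \<rho> [(C1, True)]) A" using A by simp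
    have w2: "lincomb cs [eE, eF] [(C2, True)] = A - Ad (rho_word \<rho> [(C2, True)]) A" using A by simp
    have a1: "0 = A $ 1 $ 2 - mE C1 * A $ 1 $ 2" "0 = A $ 2 $ 1 - mF C1 * A $ 2 $ 1"
      using arg_cong[OF w1, of "\<lambda>M. M $ 1 $ 2"] arg_cong[OF w1, of "\<lambda>M. M $ 2 $ 1"]
      unfolding cs lincomb2 eE_def eF_def by (simp_all add: Ad_rw vb_def)
    have a2: "c0 = A $ 1 $ 2 - mE C2 * A $ 1 $ 2" "c1 = A $ 2 $ 1 - mF C2 * A $ 2 $ 1"
      using arg_cong[OF w2, of "\<lambda>M. M $ 1 $ 2"] arg_cong[OF w2, of "\<lambda>M. M $ 2 $ 1"]
      unfolding cs lincomb2 eE_def eF_def by (simp_all add: Ad_rw vb_def)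
    have "A $ 1 $ 2 = 0"
    proof -
      have "(1 - mE C1) * A $ 1 $ 2 = 0" using a1(1) by (simp add: algebra_simps)
      then show ?thesis using O(1) by simp
    qed
    moreover have "A $ 2 $ 1 = 0"
    proof -
      have "(1 - mF C1) * A $ 2 $ 1 = 0" using a1(2) by (simp add: algebra_simps)
      then show ?thesis using OF(1) by simp
    qed
    ultimately show ?thesis using a2 cs by simp
  qed
  show ?thesis unfolding H1_dim_def quot_dim_eq_def
    using inZ span indep by (intro exI[of _ "[eE, eF]"]) auto
qed

end


theorem lemma5p14:
  fixes p q :: "nat \<Rightarrow> int" and \<rho> :: "gen \<Rightarrow> cmat"
  assumes "\<forall>i \<in> {1,2,3}. p i \<ge> 1 \<and> coprime (p i) (q i)"
    and "(\<Sum>i\<in>{1,2,3::nat}. of_int (q i) / of_int (p i) :: real) \<noteq> 0"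
    and "is_SL2_rep p q \<rho>"
    and "diagonal_rep \<rho>"
    and "\<rho> H = mat 1 \<or> \<rho> H = - mat 1"
  shows "(\<not> exceptional \<rho> \<longrightarrow> Z1 p q \<rho> = B1 \<rho>) \<and>
         (exceptional \<rho> \<longrightarrow> H1_dim p q \<rho> 2)"
proof -
  interpret R: repr p q \<rho> using assms(3-5) by unfold_locales
  have P: "p 1 \<ge> 1" "p 2 \<ge> 1" "p 3 \<ge> 1" using assms(1) by auto
  have er: "real_of_int (q 1) / real_of_int (p 1) + real_of_int (q 2) / real_of_int (p 2)
      + real_of_int (q 3) / real_of_int (p 3) \<noteq> 0"
    using assms(2) by (simp add: add.assoc)
  have ce: "(of_int (q 1) / of_int (p 1) + of_int (q 2) / of_int (p 2) + of_int (q 3) / of_int (p 3) :: complex)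
      = of_real (real_of_int (q 1) / real_of_int (p 1) + real_of_int (q 2) / real_of_int (p 2)
      + real_of_int (q 3) / real_of_int (p 3))" by simp
  have e: "(of_int (q 1) / of_int (p 1) + of_int (q 2) / of_int (p 2) + of_int (q 3) / of_int (p 3) :: complex) \<noteq> 0"
    unfolding ce using er by (simp only: of_real_eq_0_iff) simp
  have ex: "exceptional \<rho> \<longleftrightarrow> R.mE C1 \<noteq> 1 \<and> R.mE C2 \<noteq> 1 \<and> R.mE C3 \<noteq> 1"
    unfolding exceptional_def using assms(5) R.pm1_iff[of C1] R.pm1_iff[of C2] R.pm1_iff[of C3] by auto
  show ?thesis
  proof (intro conjI impI)
    assume "\<not> exceptional \<rho>"
    then have "R.mE C1 = 1 \<or> R.mE C2 = 1 \<or> R.mE C3 = 1" using ex by blast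
    then show "Z1 p q \<rho> = B1 \<rho>" using R.nonexc[OF P e] by blast
  next
    assume "exceptional \<rho>"
    then show "H1_dim p q \<rho> 2" using R.exc[OF P e] ex by blast
  qed
qed

end
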